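(* Up to isomorphism, the only $5$-regular, $1$ net-regular SRSG whose underlying graph is complete (i.e. $K_6$) is $\dot G_2$, the signed $K_6$ whose negative edges form two vertex-disjoint triangles; it has parameters $(6,5,-4,4)$. Moreover, no connected $5$-regular $1$ net-regular SRSG belongs to $\mathcal C_2$.
   Context: A signed graph $\dot G=(G,\sigma)$ is a simple graph $G$ with $\sigma:E(G)\to\{\pm1\}$; adjacency matrix $A_{\dot G}$ has entries $\sigma(v_iv_j)$ for adjacent vertices and $0$ otherwise. Net-degree is $d^+(v)-d^-(v)$; $\rho$ net-regular means all net-degrees equal $\rho$. $\dot G$ on $n$ vertices is an SRSG if it is neither homogeneous (all edges of one sign) complete nor edgeless and there are $r\in\mathbb N$, $a,b,c\in\mathbb Z$ with $(A^2_{\dot G})_{ii}=r$, $(A^2_{\dot G})_{ij}=a$ for positive edges, $b$ for negative edges, $c$ for distinct non-adjacent pairs; parameters $(n,r,a,b)$ when $G$ is complete. $\mathcal C_2$ is the class of inhomogeneous non-complete SRSGs with $a=-b$ and $c=0$. Isomorphism means sign-preserving graph isomorphism. *)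

theory Defs
  imports Main
begin

text \<open>A signed graph on a finite vertex set V is given by its signed adjacency
function s: s u v = sigma(uv) in {1,-1} if u,v adjacent, 0 otherwise.
So s is exactly the signed adjacency matrix A indexed by V.\<close>

definition signed_graph :: "'a set \<Rightarrow> ('a \<Rightarrow> 'a \<Rightarrow> int) \<Rightarrow> bool" where
  "signed_graph V s \<longleftrightarrow> finite V \<and>
     (\<forall>u v. s u v \<in> {-1, 0, 1}) \<and> (\<forall>u v. s u v = s v u) \<and> (\<forall>v. s v v = 0) \<and>
     (\<forall>u v. s u v \<noteq> 0 \<longrightarrow> u \<in> V \<and> v \<in> V)"

definition adj_sq :: "'a set \<Rightarrow> ('a \<Rightarrow> 'a \<Rightarrow> int) \<Rightarrow> 'a \<Rightarrow> 'a \<Rightarrow> int" where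
  "adj_sq V s u v = (\<Sum>w\<in>V. s u w * s w v)"

definition degree :: "'a set \<Rightarrow> ('a \<Rightarrow> 'a \<Rightarrow> int) \<Rightarrow> 'a \<Rightarrow> nat" where
  "degree V s v = card {w\<in>V. s v w \<noteq> 0}"

definition net_degree :: "'a set \<Rightarrow> ('a \<Rightarrow> 'a \<Rightarrow> int) \<Rightarrow> 'a \<Rightarrow> int" where
  "net_degree V s v = int (card {w\<in>V. s v w = 1}) - int (card {w\<in>V. s v w = -1})"

definition regular :: "'a set \<Rightarrow> ('a \<Rightarrow> 'a \<Rightarrow> int) \<Rightarrow> nat \<Rightarrow> bool" where
  "regular V s k \<longleftrightarrow> (\<forall>v\<in>V. degree V s v = k)"

definition net_regular :: "'a set \<Rightarrow> ('a \<Rightarrow> 'a \<Rightarrow> int) \<Rightarrow> int \<Rightarrow> bool" where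
  "net_regular V s \<rho> \<longleftrightarrow> (\<forall>v\<in>V. net_degree V s v = \<rho>)"

definition complete :: "'a set \<Rightarrow> ('a \<Rightarrow> 'a \<Rightarrow> int) \<Rightarrow> bool" where
  "complete V s \<longleftrightarrow> (\<forall>u\<in>V. \<forall>v\<in>V. u \<noteq> v \<longrightarrow> s u v \<noteq> 0)"

definition homogeneous :: "'a set \<Rightarrow> ('a \<Rightarrow> 'a \<Rightarrow> int) \<Rightarrow> bool" where
  "homogeneous V s \<longleftrightarrow> (\<forall>u\<in>V. \<forall>v\<in>V. s u v \<ge> 0) \<or> (\<forall>u\<in>V. \<forall>v\<in>V. s u v \<le> 0)"

definition edgeless :: "'a set \<Rightarrow> ('a \<Rightarrow> 'a \<Rightarrow> int) \<Rightarrow> bool" where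
  "edgeless V s \<longleftrightarrow> (\<forall>u\<in>V. \<forall>v\<in>V. s u v = 0)"

definition connected_sg :: "'a set \<Rightarrow> ('a \<Rightarrow> 'a \<Rightarrow> int) \<Rightarrow> bool" where
  "connected_sg V s \<longleftrightarrow> (\<forall>u\<in>V. \<forall>v\<in>V. (\<lambda>x y. s x y \<noteq> 0)\<^sup>*\<^sup>* u v)"

definition srsg_params :: "'a set \<Rightarrow> ('a \<Rightarrow> 'a \<Rightarrow> int) \<Rightarrow> nat \<Rightarrow> int \<Rightarrow> int \<Rightarrow> int \<Rightarrow> bool" where
  "srsg_params V s r a b c \<longleftrightarrow> signed_graph V s \<and>
     \<not> (homogeneous V s \<and> complete V s) \<and> \<not> edgeless V s \<and>
     (\<forall>v\<in>V. adj_sq V s v v = int r) \<and>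
     (\<forall>u\<in>V. \<forall>v\<in>V. u \<noteq> v \<longrightarrow>
        (s u v = 1 \<longrightarrow> adj_sq V s u v = a) \<and>
        (s u v = -1 \<longrightarrow> adj_sq V s u v = b) \<and>
        (s u v = 0 \<longrightarrow> adj_sq V s u v = c))"

definition SRSG :: "'a set \<Rightarrow> ('a \<Rightarrow> 'a \<Rightarrow> int) \<Rightarrow> bool" where
  "SRSG V s \<longleftrightarrow> (\<exists>r a b c. srsg_params V s r a b c)"

definition in_C2 :: "'a set \<Rightarrow> ('a \<Rightarrow> 'a \<Rightarrow> int) \<Rightarrow> bool" where
  "in_C2 V s \<longleftrightarrow> \<not> homogeneous V s \<and> \<not> complete V s \<and>
     (\<exists>r a. srsg_params V s r a (-a) 0)"

definition sg_iso :: "'a set \<Rightarrow> ('a \<Rightarrow> 'a \<Rightarrow> int) \<Rightarrow> 'b set \<Rightarrow> ('b \<Rightarrow> 'b \<Rightarrow> int) \<Rightarrow> bool" where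
  "sg_iso V s W t \<longleftrightarrow> (\<exists>f. bij_betw f V W \<and> (\<forall>u\<in>V. \<forall>v\<in>V. t (f u) (f v) = s u v))"

definition G2_V :: "nat set" where "G2_V = {0..5}"

definition G2_s :: "nat \<Rightarrow> nat \<Rightarrow> int" where
  "G2_s i j = (if i \<in> G2_V \<and> j \<in> G2_V \<and> i \<noteq> j
               then (if (i < 3) = (j < 3) then -1 else 1) else 0)"

end

theory Submission
  imports Defs
begin


lemma sg_val: "signed_graph V s \<Longrightarrow> s u v = -1 \<or> s u v = 0 \<or> s u v = 1"
  unfolding signed_graph_def by blast
lemma sg_sym: "signed_graph V s \<Longrightarrow> s u v = s v u"
  unfolding signed_graph_def by blast
lemma sg_diag[simp]: "signed_graph V s \<Longrightarrow> s v v = 0"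
  unfolding signed_graph_def by blast
lemma sg_fin: "signed_graph V s \<Longrightarrow> finite V"
  unfolding signed_graph_def by blast
lemma sg_in: "signed_graph V s \<Longrightarrow> s u v \<noteq> 0 \<Longrightarrow> u \<in> V \<and> v \<in> V"
  unfolding signed_graph_def by blast

lemma card_filter_sum: "finite A \<Longrightarrow> int (card {x\<in>A. P x}) = (\<Sum>x\<in>A. if P x then 1 else 0)"
  by (simp add: sum.inter_filter[symmetric])

lemma net_sum:
  assumes "signed_graph V s" shows "(\<Sum>w\<in>V. s v w) = net_degree V s v"
proof -
  have e: "s v w = (if s v w = 1 then 1 else 0) - (if s v w = -1 then 1 else 0)" for w
    using sg_val[OF assms, of v w] by auto
  have "(\<Sum>w\<in>V. s v w) = (\<Sum>w\<in>V. (if s v w = 1 then 1 else 0) - (if s v w = -1 then 1 else 0))"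
    by (subst e) simp
  also have "\<dots> = net_degree V s v"
    unfolding net_degree_def sum_subtractf
    using card_filter_sum[OF sg_fin[OF assms]] by simp
  finally show ?thesis .
qed

lemma deg_sum:
  assumes "signed_graph V s" shows "adj_sq V s v v = int (degree V s v)"
proof -
  have e: "s v w * s w v = (if s v w \<noteq> 0 then 1 else 0)" for w
    using sg_val[OF assms, of v w] sg_sym[OF assms, of v w] by auto
  show ?thesis unfolding adj_sq_def degree_def e
    using card_filter_sum[OF sg_fin[OF assms]] by simp
qed

lemma rowsum:
  assumes "signed_graph V s" "net_regular V s \<rho>" "u \<in> V"
  shows "(\<Sum>v\<in>V. adj_sq V s u v) = \<rho> * \<rho>"
proof -
  have "(\<Sum>v\<in>V. adj_sq V s u v) = (\<Sum>w\<in>V. \<Sum>v\<in>V. s u w * s w v)"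
    unfolding adj_sq_def by (rule sum.swap)
  also have "\<dots> = (\<Sum>w\<in>V. s u w * \<rho>)"
    by (rule sum.cong, simp, simp add: sum_distrib_left[symmetric] net_sum[OF assms(1)]
        assms(2)[unfolded net_regular_def])
  also have "\<dots> = \<rho> * \<rho>"
    using net_sum[OF assms(1)] assms(2,3) unfolding net_regular_def
    by (simp add: sum_distrib_right[symmetric])
  finally show ?thesis .
qed

lemma rowsum2:
  assumes p: "srsg_params V s r a b c" and u: "u \<in> V"
  shows "(\<Sum>v\<in>V. adj_sq V s u v) = int r + a * int (card {v\<in>V. s u v = 1})
     + b * int (card {v\<in>V. s u v = -1}) + c * int (card {v\<in>V. v \<noteq> u \<and> s u v = 0})"
proof -
  have sg: "signed_graph V s" using p unfolding srsg_params_def by blast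
  have fin: "finite V" using sg_fin[OF sg] .
  have e: "adj_sq V s u v = a * (if s u v = 1 then 1 else 0) + b * (if s u v = -1 then 1 else 0)
      + c * (if s u v = 0 then 1 else 0)" if "v \<in> V - {u}" for v
    using that p u sg_val[OF sg, of u v] unfolding srsg_params_def by auto
  have "(\<Sum>v\<in>V. adj_sq V s u v) = adj_sq V s u u + (\<Sum>v\<in>V-{u}. adj_sq V s u v)"
    using fin u by (simp add: sum.remove)
  also have "(\<Sum>v\<in>V-{u}. adj_sq V s u v) = (\<Sum>v\<in>V-{u}. a * (if s u v = 1 then 1 else 0) + b * (if s u v = -1 then 1 else 0)
      + c * (if s u v = 0 then 1 else 0))" using e by (rule sum.cong[OF refl])
  also have "\<dots> = a * int (card {v\<in>V-{u}. s u v = 1}) + b * int (card {v\<in>V-{u}. s u v = -1})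
      + c * int (card {v\<in>V-{u}. s u v = 0})"
    using card_filter_sum[of "V-{u}"] fin by (simp add: sum.distrib sum_distrib_left[symmetric])
  also have "{v\<in>V-{u}. s u v = 1} = {v\<in>V. s u v = 1}" using sg by auto
  also have "{v\<in>V-{u}. s u v = -1} = {v\<in>V. s u v = -1}" using sg by auto
  also have "{v\<in>V-{u}. s u v = 0} = {v\<in>V. v \<noteq> u \<and> s u v = 0}" by auto
  finally show ?thesis using p u unfolding srsg_params_def by simp
qed

lemma pn_counts:
  assumes sg: "signed_graph V s" and d: "degree V s u = 5" and n: "net_degree V s u = 1"
  shows "card {v\<in>V. s u v = 1} = 3 \<and> card {v\<in>V. s u v = -1} = 2"
proof -
  have fin: "finite V" using sg_fin[OF sg] .
  have "{w\<in>V. s u w \<noteq> 0} = {v\<in>V. s u v = 1} \<union> {v\<in>V. s u v = -1}"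
    using sg_val[OF sg, of u] by auto
  hence "card {v\<in>V. s u v = 1} + card {v\<in>V. s u v = -1} = 5"
    using d fin unfolding degree_def by (simp add: card_Un_disjoint[symmetric] disjoint_iff)
  thus ?thesis using n unfolding net_degree_def by linarith
qed

lemma abs_sum_le_card:
  assumes "finite A" "\<And>x. x \<in> A \<Longrightarrow> \<bar>f x\<bar> \<le> (1::int)"
  shows "\<bar>sum f A\<bar> \<le> int (card A)"
proof -
  have "\<bar>sum f A\<bar> \<le> (\<Sum>x\<in>A. \<bar>f x\<bar>)" by (rule sum_abs)
  also have "\<dots> \<le> (\<Sum>x\<in>A. 1)" by (rule sum_mono, rule assms(2))
  finally show ?thesis by simp
qed

lemma common_nbrs:
  assumes sg: "signed_graph V s" and u: "u \<in> V" and v: "v \<in> V" and uv: "s u v \<noteq> 0"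
    and d: "degree V s u = 5" and a4: "\<bar>adj_sq V s u v\<bar> = 4"
    and w: "w \<in> V" "w \<noteq> v" "s u w \<noteq> 0"
  shows "s w v \<noteq> 0"
proof
  assume wv: "s w v = 0"
  define Nu where "Nu = {w\<in>V. s u w \<noteq> 0}"
  have fin: "finite V" using sg_fin[OF sg] .
  have cNu: "card Nu = 5" using d unfolding Nu_def degree_def .
  have "adj_sq V s u v = (\<Sum>x\<in>Nu - {v} - {w}. s u x * s x v)"
    unfolding adj_sq_def
    by (rule sum.mono_neutral_right[OF fin]) (use wv sg in \<open>auto simp: Nu_def\<close>)
  moreover have "card (Nu - {v} - {w}) = 3"
    using cNu w v uv by (simp add: Nu_def)
  moreover have "\<bar>s u x * s x v\<bar> \<le> 1" for x
    using sg_val[OF sg, of u x] sg_val[OF sg, of x v] by (auto simp: abs_mult)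
  ultimately have "\<bar>adj_sq V s u v\<bar> \<le> 3"
    using abs_sum_le_card[of "Nu - {v} - {w}" "\<lambda>x. s u x * s x v"] fin
    by (simp add: Nu_def)
  thus False using a4 by simp
qed

lemma part3:
  assumes sg: "signed_graph V s" and conn: "connected_sg V s" and reg: "regular V s 5"
    and nr: "net_regular V s 1" and c2: "in_C2 V s"
  shows False
proof -
  obtain u v where u: "u \<in> V" and v: "v \<in> V" and uv: "u \<noteq> v" "s u v = 0"
    using c2 unfolding in_C2_def complete_def by blast
  obtain r a where p: "srsg_params V s r a (-a) 0" using c2 unfolding in_C2_def by blast
  have deg: "degree V s x = 5" if "x \<in> V" for x using reg that unfolding regular_def by blast
  have r5: "int r = 5" using p u deg_sum[OF sg, of u] deg[OF u] unfolding srsg_params_def by simp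
  have pc: "card {v\<in>V. s u v = 1} = 3 \<and> card {v\<in>V. s u v = -1} = 2"
    using pn_counts[OF sg deg[OF u]] nr u unfolding net_regular_def by blast
  have "(1::int) = int r + a * 3 + (-a) * 2"
    using rowsum[OF sg nr u] rowsum2[OF p u] pc by simp
  hence a: "a = -4" using r5 by simp
  have a4: "\<bar>adj_sq V s x y\<bar> = 4" if "x \<in> V" "y \<in> V" "s x y \<noteq> 0" for x y
  proof -
    have "x \<noteq> y" using that sg by auto
    thus ?thesis using p that a sg_val[OF sg, of x y] unfolding srsg_params_def by auto
  qed
  have reach: "z = u \<or> s u z \<noteq> 0" if "(\<lambda>x y. s x y \<noteq> 0)\<^sup>*\<^sup>* u z" for z
    using that
  proof (induction rule: rtranclp_induct)
    case base then show ?case by simp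
  next
    case (step y z)
    show ?case
    proof (cases "y = u")
      case True then show ?thesis using step by simp
    next
      case False
      hence uy: "s u y \<noteq> 0" using step by simp
      show ?thesis
      proof (cases "z = u")
        case True then show ?thesis by simp
      next
        case False
        have yV: "y \<in> V" and zV: "z \<in> V" using sg_in[OF sg step(2)] by auto
        have yu: "s y u \<noteq> 0" using uy sg_sym[OF sg] by metis
        have "s z u \<noteq> 0"
          by (rule common_nbrs[OF sg yV u yu deg[OF yV] a4[OF yV u yu] zV False step(2)])
        then show ?thesis using sg_sym[OF sg] by metis
      qed
    qed
  qed
  have "(\<lambda>x y. s x y \<noteq> 0)\<^sup>*\<^sup>* u v" using conn u v unfolding connected_sg_def by blast
  from reach[OF this] show False using uv by simp
qed

lemma adj_W:
  assumes sg: "signed_graph V s"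
  shows "adj_sq V s u v = (\<Sum>w\<in>V-{u,v}. s u w * s w v)"
  unfolding adj_sq_def
  by (rule sum.mono_neutral_right[OF sg_fin[OF sg]]) (use sg in auto)

lemma sum_minus2:
  assumes "finite V" "u \<in> V" "v \<in> V" "u \<noteq> v"
  shows "(\<Sum>w\<in>V. f w) = f u + f v + (\<Sum>w\<in>V-{u,v}. (f w :: int))"
proof -
  have "V = insert u (insert v (V-{u,v}))" using assms by auto
  hence "(\<Sum>w\<in>V. f w) = (\<Sum>w\<in>insert u (insert v (V-{u,v})). f w)" by simp
  also have "\<dots> = f u + f v + (\<Sum>w\<in>V-{u,v}. (f w :: int))"
    using assms by simp
  finally show ?thesis .
qed

lemma key2:
  assumes sg: "signed_graph V s" and cp: "complete V s" and nr: "net_regular V s 1"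
    and u: "u \<in> V" and v: "v \<in> V" and uv: "u \<noteq> v" and c6: "card V = 6"
  shows "\<exists>Q. Q \<ge> 0 \<and> 4 dvd Q \<and> adj_sq V s u v = Q - 2 - 2 * s u v"
proof -
  define W where "W = V - {u,v}"
  have fin: "finite V" using sg_fin[OF sg] .
  define Q where "Q = (\<Sum>w\<in>W. (1 - s u w) * (1 - s w v))"
  have pm: "s x y = 1 \<or> s x y = -1" if "x \<in> V" "y \<in> V" "x \<noteq> y" for x y
    using cp that sg_val[OF sg, of x y] unfolding complete_def by auto
  have id: "s u w * s w v = (1 - s u w) * (1 - s w v) - 1 + s u w + s w v" for w
    by (simp add: algebra_simps)
  have cW: "card W = 4" using c6 u v uv fin by (simp add: W_def)
  have s1: "(\<Sum>w\<in>W. s u w) = 1 - s u v"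
    using sum_minus2[OF fin u v uv, of "s u"] net_sum[OF sg, of u] nr u
    unfolding net_regular_def W_def using sg by simp
  have s2: "(\<Sum>w\<in>W. s w v) = 1 - s u v"
  proof -
    have "(\<Sum>w\<in>W. s w v) = (\<Sum>w\<in>W. s v w)" using sg_sym[OF sg] by metis
    also have "\<dots> = 1 - s u v"
      using sum_minus2[OF fin u v uv, of "s v"] net_sum[OF sg, of v] nr v sg_sym[OF sg, of u v]
      unfolding net_regular_def W_def using sg by simp
    finally show ?thesis .
  qed
  have "adj_sq V s u v = (\<Sum>w\<in>W. (1 - s u w) * (1 - s w v) - 1 + s u w + s w v)"
    unfolding adj_W[OF sg] W_def[symmetric] by (subst id) simp
  also have "\<dots> = Q - 2 - 2 * s u v"
    unfolding Q_def by (simp add: sum.distrib sum_subtractf s1 s2 cW)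
  finally have e: "adj_sq V s u v = Q - 2 - 2 * s u v" .
  have t: "(1 - s u w) * (1 - s w v) = 0 \<or> (1 - s u w) * (1 - s w v) = 4" if "w \<in> W" for w
    using pm[OF u, of w] pm[of w v] that v unfolding W_def by auto
  have "Q \<ge> 0" unfolding Q_def by (rule sum_nonneg) (use t in force)
  moreover have "4 dvd Q" unfolding Q_def by (rule dvd_sum) (use t in force)
  ultimately show ?thesis using e by blast
qed

lemma all_ones:
  assumes "finite W" "\<And>w. w \<in> W \<Longrightarrow> f w \<le> (1::int)" "sum f W = int (card W)"
  shows "\<forall>w\<in>W. f w = 1"
proof -
  have "(\<Sum>w\<in>W. 1 - f w) = 0" using assms(3) by (simp add: sum_subtractf)
  hence "\<forall>w\<in>W. 1 - f w = 0"
    using sum_nonneg_eq_0_iff[OF assms(1), of "\<lambda>w. 1 - f w"] assms(2) by force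
  thus ?thesis by simp
qed

lemma part2:
  assumes sg: "signed_graph V s" and cp: "complete V s" and reg: "regular V s 5"
    and nr: "net_regular V s 1" and sr: "SRSG V s"
  shows "sg_iso V s G2_V G2_s \<and> card V = 6 \<and> (\<forall>c. srsg_params V s 5 (-4) 4 c)"
proof -
  obtain r a b c where p: "srsg_params V s r a b c" using sr unfolding SRSG_def by blast
  have fin: "finite V" using sg_fin[OF sg] .
  have deg: "degree V s x = 5" if "x \<in> V" for x using reg that unfolding regular_def by blast
  have pm: "s x y = 1 \<or> s x y = -1" if "x \<in> V" "y \<in> V" "x \<noteq> y" for x y
    using cp that sg_val[OF sg, of x y] unfolding complete_def by auto
  have "V \<noteq> {}" using p unfolding srsg_params_def edgeless_def by blast
  then obtain u0 where u0: "u0 \<in> V" by blast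
  have "{w\<in>V. s u0 w \<noteq> 0} = V - {u0}" using cp u0 sg unfolding complete_def by auto
  hence c6: "card V = 6" using deg[OF u0] fin u0 unfolding degree_def by simp
  have r5: "int r = 5" using p u0 deg_sum[OF sg, of u0] deg[OF u0] unfolding srsg_params_def by simp
  have Z: "{v\<in>V. v \<noteq> u0 \<and> s u0 v = 0} = {}" using cp u0 unfolding complete_def by auto
  have pc: "card {v\<in>V. s u0 v = 1} = 3 \<and> card {v\<in>V. s u0 v = -1} = 2"
    using pn_counts[OF sg deg[OF u0]] nr u0 unfolding net_regular_def by blast
  have eq: "(1::int) = int r + a * 3 + b * 2"
    using rowsum[OF sg nr u0] rowsum2[OF p u0] pc Z by simp
  obtain x y where Nn: "{v\<in>V. s u0 v = -1} = {x,y}" and xy: "x \<noteq> y"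
    using pc card_2_iff by metis
  have x: "x \<in> V" "s u0 x = -1" and y: "y \<in> V" "s u0 y = -1" using Nn by blast+
  have ux: "u0 \<noteq> x" "u0 \<noteq> y" using x y sg by auto
  have "{v\<in>V. s u0 v = 1} \<noteq> {}" using pc by force
  then obtain pp where pp: "pp \<in> V" "s u0 pp = 1" by blast
  have upp: "u0 \<noteq> pp" using pp sg by auto
  obtain Q where Q: "Q \<ge> 0" "4 dvd Q" "adj_sq V s u0 x = Q - 2 - 2 * s u0 x"
    using key2[OF sg cp nr u0 x(1) ux(1) c6] by blast
  obtain Q' where Q': "Q' \<ge> 0" "adj_sq V s u0 pp = Q' - 2 - 2 * s u0 pp"
    using key2[OF sg cp nr u0 pp(1) upp c6] by blast
  have bQ: "b = Q" using Q x p u0 ux unfolding srsg_params_def by auto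
  have aQ: "a = Q' - 4" using Q' pp p u0 upp unfolding srsg_params_def by auto
  obtain k where k: "Q = 4 * k" using Q(2) by blast
  have ab: "a = -4 \<and> b = 4" using eq r5 bQ aQ k Q(1) Q'(1) by presburger
  have tri: "s u w = s w v" if "u \<in> V" "v \<in> V" "s u v = -1" "w \<in> V" "w \<noteq> u" "w \<noteq> v" for u v w
  proof -
    have uv: "u \<noteq> v" using that sg by auto
    have "adj_sq V s u v = 4" using p that ab uv unfolding srsg_params_def by auto
    hence e4: "(\<Sum>w\<in>V-{u,v}. s u w * s w v) = int (card (V-{u,v}))"
      using adj_W[OF sg] c6 that fin uv by simp
    have le1: "s u w * s w v \<le> 1" for w
      using sg_val[OF sg, of u w] sg_val[OF sg, of w v] by auto
    have fW: "finite (V-{u,v})" using fin by simp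
    have "\<forall>w\<in>V-{u,v}. s u w * s w v = 1" by (rule all_ones[OF fW le1 e4])
    hence "s u w * s w v = 1" using that by blast
    thus ?thesis using pm[of u w] pm[of w v] that by auto
  qed
  have sxy: "s x y = -1" using tri[OF u0 x(1) x(2) y(1) ux(2)[symmetric] xy[symmetric]] y sg_sym[OF sg] by metis
  define R where "R = V - {u0,x,y}"
  have cR: "card R = 3" using c6 fin u0 x y ux xy unfolding R_def by (simp add: card_Diff_subset)
  then obtain p q r' where R: "R = {p,q,r'}" and pqr: "p \<noteq> q" "q \<noteq> r'" "p \<noteq> r'"
    using card_3_iff by metis
  have RV: "z \<in> V" "z \<noteq> u0" "z \<noteq> x" "z \<noteq> y" if "z \<in> R" for z using that R_def by auto
  have Ru: "s u0 z = 1" if "z \<in> R" for z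
    using pm[OF u0 RV(1)[OF that]] RV[OF that] Nn by auto
  have Rx: "s x z = 1" if "z \<in> R" for z
    using tri[OF u0 x(1) x(2) RV(1)[OF that]] RV[OF that] Ru[OF that] sg_sym[OF sg] by metis
  have Ry: "s y z = 1" if "z \<in> R" for z
    using tri[OF u0 y(1) y(2) RV(1)[OF that]] RV[OF that] Ru[OF that] sg_sym[OF sg] by metis
  have RR: "s z z' = -1" if "z \<in> R" "z' \<in> R" "z \<noteq> z'" for z z'
  proof -
    have zV: "z \<in> V" using RV that by auto
    have "{w\<in>V. s z w = -1} \<subseteq> R - {z}"
      using Ru[OF that(1)] Rx[OF that(1)] Ry[OF that(1)] sg_sym[OF sg] sg unfolding R_def by force
    moreover have "card {w\<in>V. s z w = -1} = 2"
      using pn_counts[OF sg deg[OF zV]] nr zV unfolding net_regular_def by blast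
    moreover have "card (R - {z}) = 2" using cR that by simp
    moreover have "finite (R - {z})" using fin R_def by simp
    ultimately have "{w\<in>V. s z w = -1} = R - {z}" by (metis card_subset_eq)
    thus ?thesis using that by blast
  qed
  have Vset: "V = {u0,x,y,p,q,r'}" using R R_def u0 x y by auto
  have dist: "p \<noteq> u0" "p \<noteq> x" "p \<noteq> y" "q \<noteq> u0" "q \<noteq> x" "q \<noteq> y"
     "r' \<noteq> u0" "r' \<noteq> x" "r' \<noteq> y" using RV R by auto
  have inR: "p \<in> R" "q \<in> R" "r' \<in> R" using R by auto
  note vals = x(2) y(2) sxy Ru[OF inR(1)] Ru[OF inR(2)] Ru[OF inR(3)]
     Rx[OF inR(1)] Rx[OF inR(2)] Rx[OF inR(3)] Ry[OF inR(1)] Ry[OF inR(2)] Ry[OF inR(3)]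
     RR[OF inR(1) inR(2) pqr(1)] RR[OF inR(2) inR(3) pqr(2)] RR[OF inR(1) inR(3) pqr(3)]
  define f where "f w = (if w = u0 then 0 else if w = x then 1 else if w = y then 2
     else if w = p then 3 else if w = q then (4::nat) else 5)" for w
  have inj: "inj_on f V" unfolding Vset inj_on_def f_def using ux xy pqr dist by auto
  have img: "f ` V = G2_V" unfolding Vset G2_V_def f_def using ux xy pqr dist by auto
  have vals': "s v w = t" if "s w v = t" for v w t using that sg_sym[OF sg] by metis
  have iso: "\<forall>v\<in>V. \<forall>w\<in>V. G2_s (f v) (f w) = s v w"
  proof -
    have fv: "f u0 = 0" "f x = 1" "f y = 2" "f p = 3" "f q = 4" "f r' = 5"
      unfolding f_def using ux xy pqr dist by auto
    have d0: "s u0 u0 = 0" "s x x = 0" "s y y = 0" "s p p = 0" "s q q = 0" "s r' r' = 0"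
      using sg by auto
    show ?thesis unfolding Vset using vals vals[THEN vals'] fv d0
      by (simp add: G2_s_def G2_V_def)
  qed
  have sgi: "sg_iso V s G2_V G2_s" unfolding sg_iso_def bij_betw_def using inj img iso by blast
  have sp: "srsg_params V s 5 (-4) 4 c'" for c'
  proof -
    have "\<not> homogeneous V s" unfolding homogeneous_def using u0 x pp by force
    moreover have "\<not> edgeless V s" unfolding edgeless_def using u0 x by force
    moreover have "\<forall>v\<in>V. adj_sq V s v v = int 5" using deg_sum[OF sg] deg by simp
    moreover have "\<forall>u\<in>V. \<forall>v\<in>V. u \<noteq> v \<longrightarrow>
        (s u v = 1 \<longrightarrow> adj_sq V s u v = -4) \<and>
        (s u v = -1 \<longrightarrow> adj_sq V s u v = 4) \<and>
        (s u v = 0 \<longrightarrow> adj_sq V s u v = c')"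
      using p ab cp unfolding srsg_params_def complete_def by auto
    ultimately show ?thesis unfolding srsg_params_def using sg by blast
  qed
  show ?thesis using sgi c6 sp by blast
qed

lemma G2V: "G2_V = {0,1,2,3,4,5}" unfolding G2_V_def by auto

lemma G2_sg: "signed_graph G2_V G2_s"
  unfolding signed_graph_def G2_s_def by (auto simp: G2V)

lemma part1:
  "signed_graph G2_V G2_s \<and> complete G2_V G2_s \<and> regular G2_V G2_s 5 \<and>
   net_regular G2_V G2_s 1 \<and> card G2_V = 6 \<and> srsg_params G2_V G2_s 5 (-4) 4 0"
proof -
  have cp: "complete G2_V G2_s" unfolding complete_def G2_s_def by auto
  have ds: "adj_sq G2_V G2_s v v = 5" if "v \<in> G2_V" for v
    using that unfolding adj_sq_def G2V by (auto simp: G2_s_def G2V)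
  have reg: "regular G2_V G2_s 5" unfolding regular_def
    using ds deg_sum[OF G2_sg] by (metis of_nat_eq_iff of_nat_numeral)
  have nr: "net_regular G2_V G2_s 1" unfolding net_regular_def
  proof
    fix v assume "v \<in> G2_V"
    thus "net_degree G2_V G2_s v = 1" unfolding net_sum[OF G2_sg, symmetric]
      by (auto simp: G2_s_def G2V)
  qed
  have offd: "\<forall>u\<in>G2_V. \<forall>v\<in>G2_V. u \<noteq> v \<longrightarrow>
        (G2_s u v = 1 \<longrightarrow> adj_sq G2_V G2_s u v = -4) \<and>
        (G2_s u v = -1 \<longrightarrow> adj_sq G2_V G2_s u v = 4) \<and>
        (G2_s u v = 0 \<longrightarrow> adj_sq G2_V G2_s u v = 0)"
    unfolding adj_sq_def G2V by (simp add: G2_s_def G2V)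
  have nh: "\<not> homogeneous G2_V G2_s" unfolding homogeneous_def
    by (auto simp: G2_s_def G2V intro!: bexI[of _ 0] bexI[of _ 1] bexI[of _ 3])
  have ne: "\<not> edgeless G2_V G2_s" unfolding edgeless_def
    by (auto simp: G2_s_def G2V intro!: bexI[of _ 0] bexI[of _ 1])
  have "srsg_params G2_V G2_s 5 (-4) 4 0" unfolding srsg_params_def
    using G2_sg nh ne ds offd by simp
  moreover have "card G2_V = 6" by (simp add: G2V)
  ultimately show ?thesis using G2_sg cp reg nr by blast
qed



theorem mainTheorem14:
  shows "(signed_graph G2_V G2_s \<and> complete G2_V G2_s \<and> regular G2_V G2_s 5 \<and>
          net_regular G2_V G2_s 1 \<and> card G2_V = 6 \<and> srsg_params G2_V G2_s 5 (-4) 4 0)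
    \<and> (\<forall>(V :: 'a set) s. signed_graph V s \<and> complete V s \<and> regular V s 5 \<and>
          net_regular V s 1 \<and> SRSG V s \<longrightarrow>
          sg_iso V s G2_V G2_s \<and> card V = 6 \<and> (\<forall>c. srsg_params V s 5 (-4) 4 c))
    \<and> (\<forall>(V :: 'b set) s. signed_graph V s \<and> connected_sg V s \<and> regular V s 5 \<and>
          net_regular V s 1 \<and> SRSG V s \<longrightarrow> \<not> in_C2 V s)"
  using part1 part2 part3 by blast

end
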